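(* Let $n$ nodes run the algorithm TLCB described in the context. Suppose $0<t_r\le n-f$, $0<t_s\le t_r$, $t_r+t_s>n$, and $0<t_b\le n-f_b$ where $f_b=t_r(n-t_r)/(t_r-t_s+1)$, and at most $f$ nodes fail. Then TLCB (with the $k$-th call to TLCB on a node constituting that node's $k$-th logical time-step) implements a $\mathrm{TSB}(t_r,t_b,n)$ full-spread broadcast abstraction.
   Context: Asynchronous network model. There are $n$ nodes numbered $1,\dots,n$; nodes may fail only by crashing permanently, after which they send no messages. A network-level Broadcast sends a message to all $n$ nodes (including the sender). Every message sent to a node that does not fail is eventually delivered after an arbitrary finite delay, and messages between each pair of nodes are delivered in the order sent. $\mathrm{Receive}()$ waits for and returns the next delivered message. Algorithm TLCR (node $i$, receive threshold $t_r$). Persistent state: a list $\vec R$ of sets, initially $[\{\}]$; $\vec R_k$ is its $k$-th element. On a call $\mathrm{TLCR}(m)$: append $\{\}$ to $\vec R$ and let $s=|\vec R|$; network-broadcast $\langle i,m,s,\vec R_{s-1}\rangle$; while $|\vec R_s|<t_r$: receive $\langle j,m',s',R'\rangle$; if $s'=s$, add $\langle j,m'\rangle$ to $\vec R_s$; else if $s'>s$, set $\vec R_s\leftarrow\vec R_s\cup R'$ (messages with $s'<s$ are ignored). Return $(\{m'\mid\langle j,m'\rangle\in\vec R_s\},\{\})$. Algorithm TLCB (node $i$, thresholds $t_r$, $t_s\le t_r$), built on TLCR with receive threshold $t_r$. On a call $\mathrm{TLCB}(m)$: $(R',\_)\leftarrow\mathrm{TLCR}(m)$; $(R'',\_)\leftarrow\mathrm{TLCR}(R')$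 (so $R''$ is a set of message-sets); $R\leftarrow R'\cup\bigcup_{X\in R''}X$; $B\leftarrow\{m'\mid$ at least $t_s$ of the message-sets in $R''$ contain $m'\}$; return $(R,B)$. Thus each TLCB step uses two TLCR steps. Threshold synchronous broadcast. A primitive, called once per logical time-step by each non-failed node with a message $m$ and returning a pair $(R,B)$ of message sets, provides $\mathrm{TSB}(t_r,t_b,t_s)$ if: (lock-step synchrony) a call at step $s$ returns (completing step $s$) unless the node fails first; (receive threshold) if node $i$'s call at step $s$ returns $(R,B)$, there is $N_R\subseteq\{1,\dots,n\}$ with $|N_R|\ge t_r$ such that $R$ is exactly the set of messages broadcast by the nodes of $N_R$ in step $s$; (broadcast threshold) there is $N_B\subseteq\{1,\dots,n\}$ with $|N_B|\ge t_b$ such that $B$ is exactly the set of messages broadcast by the nodes of $N_B$ in step $s$; (spread threshold) each $m'\in B$ returned to any node at step $s$ is contained in the receive sets $R$ returned in step $s$ to at least $t_s$ nodes (counting nodes that fail before completing step $s$ but would otherwise have received $m'$). Full-spread means $t_s=n$. *)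

theory Defs
  imports Complex_Main
begin

text \<open>Nodes are the naturals 1..n. A TLCR payload is either a plain message (first
TLCR step of a TLCB call) or a set of messages (second TLCR step).
A network message is a tuple (sender j, payload m, TLCR step s, sender's R_(s-1)).\<close>

type_synonym 'm payload = "'m + 'm set"
type_synonym 'm netmsg = "nat \<times> 'm payload \<times> nat \<times> (nat \<times> 'm payload) set"

text \<open>Local state of a node: the vector R (Rv k is R_k, stp = |R|), the result R'
of the first TLCR step of the current TLCB call, the log of messages passed to
TLCB calls, the log of TLCB results, and a crash flag.  stp = 1 means the node
has not yet made its first TLCB call.\<close>

record 'm lstate =
  Rv :: "nat \<Rightarrow> (nat \<times> 'm payload) set"
  stp :: nat
  fstR :: "'m set"
  ins :: "'m list"
  outs :: "('m set \<times> 'm set) list"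
  crashed :: bool

text \<open>Global configuration: local states, and for each ordered pair of nodes (i,j)
the FIFO history of all messages ever sent from i to j together with the number
already delivered (so the in-flight queue is drop (dlv c i j) (hist c i j)).\<close>

record 'm config =
  loc :: "nat \<Rightarrow> 'm lstate"
  hist :: "nat \<Rightarrow> nat \<Rightarrow> 'm netmsg list"
  dlv :: "nat \<Rightarrow> nat \<Rightarrow> nat"

type_synonym 'm app = "nat \<Rightarrow> ('m set \<times> 'm set) list \<Rightarrow> 'm"

definition tlcr_start :: "nat \<Rightarrow> 'm payload \<Rightarrow> 'm lstate \<Rightarrow> 'm lstate \<times> 'm netmsg" where
  "tlcr_start i p st = (let s = Suc (stp st) in
     (st\<lparr>Rv := (Rv st)(s := {}), stp := s\<rparr>, (i, p, s, Rv st (s - 1))))"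

text \<open>Start of a TLCB call: the application chooses the message (possibly depending
on the node's earlier TLCB results); first TLCR step with that message.\<close>
definition tlcb_call :: "'m app \<Rightarrow> nat \<Rightarrow> 'm lstate \<Rightarrow> 'm lstate \<times> 'm netmsg" where
  "tlcb_call app i st = (let m = app i (outs st) in tlcr_start i (Inl m) (st\<lparr>ins := ins st @ [m]\<rparr>))"

definition tlcr_recv :: "'m netmsg \<Rightarrow> 'm lstate \<Rightarrow> 'm lstate" where
  "tlcr_recv msg st = (case msg of (j, p, s', R') \<Rightarrow>
     (let s = stp st in
      if s' = s then st\<lparr>Rv := (Rv st)(s := insert (j, p) (Rv st s))\<rparr>
      else if s < s' then st\<lparr>Rv := (Rv st)(s := Rv st s \<union> R')\<rparr>
      else st))"

text \<open>After the first TLCR step of a TLCB call (even s) the second TLCR step is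
started with the received message set R'; after the second one (odd s) the TLCB call
returns (R,B) and the next TLCB call is started immediately.\<close>
definition tlcb_after :: "nat \<Rightarrow> nat \<Rightarrow> 'm app \<Rightarrow> nat \<Rightarrow> 'm lstate \<Rightarrow> 'm lstate \<times> 'm netmsg option" where
  "tlcb_after tr ts app i st = (let s = stp st; Rs = Rv st s in
     if card Rs < tr then (st, None)
     else if even s then
       (let R1 = {m. \<exists>j. (j, Inl m) \<in> Rs};
            (st', msg) = tlcr_start i (Inr R1) (st\<lparr>fstR := R1\<rparr>) in (st', Some msg))
     else
       (let R2 = {X. \<exists>j. (j, Inr X) \<in> Rs};
            R = fstR st \<union> \<Union>R2;
            B = {m. ts \<le> card {j. \<exists>X. (j, Inr X) \<in> Rs \<and> m \<in> X}};
            (st', msg) = tlcb_call app i (st\<lparr>outs := outs st @ [(R, B)]\<rparr>) in (st', Some msg)))"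

definition set_loc :: "nat \<Rightarrow> 'm lstate \<Rightarrow> 'm config \<Rightarrow> 'm config" where
  "set_loc i st c = c\<lparr>loc := (loc c)(i := st)\<rparr>"

definition send_all :: "nat \<Rightarrow> nat \<Rightarrow> 'm netmsg \<Rightarrow> 'm config \<Rightarrow> 'm config" where
  "send_all n i msg c = c\<lparr>hist := (\<lambda>a b. if a = i \<and> b \<in> {1..n} then hist c a b @ [msg] else hist c a b)\<rparr>"

definition crash_act :: "nat \<Rightarrow> 'm config \<Rightarrow> 'm config" where
  "crash_act i c = set_loc i ((loc c i)\<lparr>crashed := True\<rparr>) c"

definition start_act :: "nat \<Rightarrow> 'm app \<Rightarrow> nat \<Rightarrow> 'm config \<Rightarrow> 'm config" where
  "start_act n app i c = (let (st', msg) = tlcb_call app i (loc c i) in send_all n i msg (set_loc i st' c))"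

definition deliver_act :: "nat \<Rightarrow> nat \<Rightarrow> nat \<Rightarrow> 'm app \<Rightarrow> nat \<Rightarrow> nat \<Rightarrow> 'm config \<Rightarrow> 'm config" where
  "deliver_act n tr ts app k i c = (let
     msg = hist c k i ! dlv c k i;
     c1 = c\<lparr>dlv := (dlv c)(k := (dlv c k)(i := Suc (dlv c k i)))\<rparr>;
     (st2, om) = tlcb_after tr ts app i (tlcr_recv msg (loc c i))
   in case om of None \<Rightarrow> set_loc i st2 c1
               | Some msg' \<Rightarrow> send_all n i msg' (set_loc i st2 c1))"

definition init_lstate :: "'m lstate" where
  "init_lstate = \<lparr>Rv = (\<lambda>_. {}), stp = 1, fstR = {}, ins = [], outs = [], crashed = False\<rparr>"

definition init_config :: "'m config" where
  "init_config = \<lparr>loc = (\<lambda>_. init_lstate), hist = (\<lambda>_ _. []), dlv = (\<lambda>_ _. 0)\<rparr>"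

definition tlcb_step :: "nat \<Rightarrow> nat \<Rightarrow> nat \<Rightarrow> 'm app \<Rightarrow> 'm config \<Rightarrow> 'm config \<Rightarrow> bool" where
  "tlcb_step n tr ts app c c' \<longleftrightarrow> c' = c \<or>
     (\<exists>i\<in>{1..n}. \<not> crashed (loc c i) \<and>
        (c' = crash_act i c
         \<or> (stp (loc c i) = 1 \<and> c' = start_act n app i c)
         \<or> (\<exists>k\<in>{1..n}. 2 \<le> stp (loc c i) \<and> dlv c k i < length (hist c k i)
                      \<and> c' = deliver_act n tr ts app k i c)))"

definition failed :: "(nat \<Rightarrow> 'm config) \<Rightarrow> nat \<Rightarrow> bool" where
  "failed c i \<longleftrightarrow> (\<exists>t. crashed (loc (c t) i))"

definition fair :: "nat \<Rightarrow> (nat \<Rightarrow> 'm config) \<Rightarrow> bool" where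
  "fair n c \<longleftrightarrow> (\<forall>i\<in>{1..n}. \<not> failed c i \<longrightarrow>
      (\<exists>t. 2 \<le> stp (loc (c t) i)) \<and>
      (\<forall>k\<in>{1..n}. \<forall>t. \<exists>t'. length (hist (c t) k i) \<le> dlv (c t') k i))"

definition tlcb_execution :: "nat \<Rightarrow> nat \<Rightarrow> nat \<Rightarrow> 'm app \<Rightarrow> (nat \<Rightarrow> 'm config) \<Rightarrow> bool" where
  "tlcb_execution n tr ts app c \<longleftrightarrow>
     c 0 = init_config \<and> (\<forall>t. tlcb_step n tr ts app (c t) (c (Suc t))) \<and> fair n c"

text \<open>Node j broadcast m in (TLCB) step s, i.e. its s-th TLCB call (s >= 1) was with m.\<close>
definition broadcast_in :: "(nat \<Rightarrow> 'm config) \<Rightarrow> nat \<Rightarrow> nat \<Rightarrow> 'm \<Rightarrow> bool" where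
  "broadcast_in c j s m \<longleftrightarrow> (\<exists>t. s \<le> length (ins (loc (c t) j)) \<and> ins (loc (c t) j) ! (s - 1) = m)"

definition returns_at :: "(nat \<Rightarrow> 'm config) \<Rightarrow> nat \<Rightarrow> nat \<Rightarrow> 'm set \<Rightarrow> 'm set \<Rightarrow> bool" where
  "returns_at c i s R B \<longleftrightarrow> (\<exists>t. s \<le> length (outs (loc (c t) i)) \<and> outs (loc (c t) i) ! (s - 1) = (R, B))"

definition msgs_of :: "(nat \<Rightarrow> 'm config) \<Rightarrow> nat set \<Rightarrow> nat \<Rightarrow> 'm set" where
  "msgs_of c N s = {m. \<exists>j\<in>N. broadcast_in c j s m}"

definition threshold_set :: "nat \<Rightarrow> (nat \<Rightarrow> 'm config) \<Rightarrow> nat \<Rightarrow> nat \<Rightarrow> 'm set \<Rightarrow> bool" where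
  "threshold_set n c s th X \<longleftrightarrow>
     (\<exists>N \<subseteq> {1..n}. th \<le> card N \<and> (\<forall>j\<in>N. \<exists>m. broadcast_in c j s m) \<and> X = msgs_of c N s)"

definition TSB_full :: "nat \<Rightarrow> nat \<Rightarrow> nat \<Rightarrow> (nat \<Rightarrow> 'm config) \<Rightarrow> bool" where
  "TSB_full n tr tb c \<longleftrightarrow>
     \<comment> \<open>lock-step synchrony\<close>
     (\<forall>i\<in>{1..n}. \<not> failed c i \<longrightarrow> (\<forall>s\<ge>1. \<exists>R B. returns_at c i s R B)) \<and>
     \<comment> \<open>receive threshold and broadcast threshold\<close>
     (\<forall>i\<in>{1..n}. \<forall>s\<ge>1. \<forall>R B. returns_at c i s R B \<longrightarrow>
        threshold_set n c s tr R \<and> threshold_set n c s tb B) \<and>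
     \<comment> \<open>full spread (t_s = n)\<close>
     (\<forall>i\<in>{1..n}. \<forall>s\<ge>1. \<forall>R B m. returns_at c i s R B \<and> m \<in> B \<longrightarrow>
        (\<forall>j\<in>{1..n}. \<forall>R' B'. returns_at c j s R' B' \<longrightarrow> m \<in> R'))"

end

theory Submission
  imports Defs
begin


definition msgs1 :: "(nat \<times> 'm payload) set \<Rightarrow> 'm set" where
  "msgs1 R = {m. \<exists>j. (j, Inl m) \<in> R}"

definition pay :: "'m lstate \<Rightarrow> nat \<Rightarrow> 'm payload" where
  "pay st s = (if even s then Inl (ins st ! (s div 2 - 1)) else Inr (msgs1 (Rv st (s - 1))))"

definition hist_of :: "nat \<Rightarrow> 'm lstate \<Rightarrow> 'm netmsg list" where
  "hist_of k st = map (\<lambda>d. (k, pay st (d+2), d+2, Rv st (d+1))) [0..<stp st - 1]"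

definition OUT :: "nat \<Rightarrow> (nat \<times> 'm payload) set \<Rightarrow> (nat \<times> 'm payload) set \<Rightarrow> 'm set \<times> 'm set" where
  "OUT ts R1 R2 = (msgs1 R1 \<union> \<Union>{X. \<exists>j. (j, Inr X) \<in> R2},
                   {m. ts \<le> card {j. \<exists>X. (j, Inr X) \<in> R2 \<and> m \<in> X}})"

definition lext :: "'m lstate \<Rightarrow> 'm lstate \<Rightarrow> bool" where
  "lext st st' \<longleftrightarrow> stp st \<le> stp st' \<and> (\<forall>s. s < stp st \<longrightarrow> Rv st' s = Rv st s)
     \<and> (\<forall>s. Rv st s \<subseteq> Rv st' s) \<and> (\<exists>xs. ins st' = ins st @ xs) \<and> (\<exists>xs. outs st' = outs st @ xs)"

lemma ext_refl: "lext st st" by (auto simp: lext_def)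

lemma ext_trans: "lext a b \<Longrightarrow> lext b c \<Longrightarrow> lext a c"
proof -
  assume ab: "lext a b" and bc: "lext b c"
  from ab obtain x1 y1 where 1: "ins b = ins a @ x1" "outs b = outs a @ y1" by (auto simp: lext_def)
  from bc obtain x2 y2 where 2: "ins c = ins b @ x2" "outs c = outs b @ y2" by (auto simp: lext_def)
  have "ins c = ins a @ (x1 @ x2)" "outs c = outs a @ (y1 @ y2)" using 1 2 by auto
  moreover have "stp a \<le> stp c" using ab bc by (auto simp: lext_def)
  moreover have "\<forall>s. s < stp a \<longrightarrow> Rv c s = Rv a s" using ab bc unfolding lext_def
    by (metis less_le_trans)
  moreover have "\<forall>s. Rv a s \<subseteq> Rv c s" using ab bc unfolding lext_def by blast
  ultimately show ?thesis unfolding lext_def by blast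
qed

lemma pay_ext:
  assumes "lext st st'" "length (ins st) = stp st div 2" "2 \<le> s" "s \<le> stp st"
  shows "pay st' s = pay st s"
proof -
  obtain xs where "ins st' = ins st @ xs" using assms(1) by (auto simp: lext_def)
  moreover have "s div 2 - 1 < length (ins st)" if "even s" using assms that by auto
  moreover have "Rv st' (s-1) = Rv st (s-1)" using assms(1,3,4) by (auto simp: lext_def)
  ultimately show ?thesis by (auto simp: pay_def nth_append)
qed

lemma hist_of_same:
  assumes "lext st st'" "length (ins st) = stp st div 2" "stp st' = stp st"
  shows "hist_of k st' = hist_of k st"
  unfolding hist_of_def using assms
  by (auto intro!: map_cong pay_ext simp: lext_def)

lemma hist_of_suc:
  assumes "lext st st'" "length (ins st) = stp st div 2" "stp st' = Suc (stp st)" "1 \<le> stp st"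
  shows "hist_of k st' = hist_of k st @ [(k, pay st' (stp st'), stp st', Rv st' (stp st))]"
proof -
  have e: "[0..<stp st' - 1] = [0..<stp st - 1] @ [stp st - 1]" using assms(3,4)
    by (metis Suc_diff_le diff_Suc_1 upt_Suc_append zero_le)
  have "map (\<lambda>d. (k, pay st' (d+2), d+2, Rv st' (d+1))) [0..<stp st - 1]
      = map (\<lambda>d. (k, pay st (d+2), d+2, Rv st (d+1))) [0..<stp st - 1]"
    using assms by (auto intro!: map_cong pay_ext simp: lext_def)
  then show ?thesis unfolding hist_of_def e map_append using assms(3,4)
    by (simp del: upt_Suc)
qed

lemma tlcr_recv_cases:
  "tlcr_recv (j, p, s', R') st =
     (if s' = stp st then st\<lparr>Rv := (Rv st)(stp st := insert (j, p) (Rv st (stp st)))\<rparr>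
      else if stp st < s' then st\<lparr>Rv := (Rv st)(stp st := Rv st (stp st) \<union> R')\<rparr> else st)"
  by (simp add: tlcr_recv_def Let_def)

lemma after_stay:
  "card (Rv st (stp st)) < tr \<Longrightarrow> tlcb_after tr ts app i st = (st, None)"
  by (simp add: tlcb_after_def Let_def)

lemma after_even:
  "\<not> card (Rv st (stp st)) < tr \<Longrightarrow> even (stp st) \<Longrightarrow> tlcb_after tr ts app i st =
    (st\<lparr>fstR := msgs1 (Rv st (stp st)), Rv := (Rv st)(Suc (stp st) := {}), stp := Suc (stp st)\<rparr>,
     Some (i, Inr (msgs1 (Rv st (stp st))), Suc (stp st), Rv st (stp st)))"
  by (simp add: tlcb_after_def Let_def tlcr_start_def msgs1_def)

lemma after_odd:
  "\<not> card (Rv st (stp st)) < tr \<Longrightarrow> odd (stp st) \<Longrightarrow> tlcb_after tr ts app i st =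
    (let o1 = outs st @ [(fstR st \<union> \<Union>{X. \<exists>j. (j, Inr X) \<in> Rv st (stp st)},
                  {m. ts \<le> card {j. \<exists>X. (j, Inr X) \<in> Rv st (stp st) \<and> m \<in> X}})];
         m = app i o1 in
    (st\<lparr>outs := o1, ins := ins st @ [m], Rv := (Rv st)(Suc (stp st) := {}), stp := Suc (stp st)\<rparr>,
     Some (i, Inl m, Suc (stp st), Rv st (stp st))))"
  by (simp add: tlcb_after_def Let_def tlcr_start_def tlcb_call_def)


definition loc_ok :: "nat \<Rightarrow> nat \<Rightarrow> 'm lstate \<Rightarrow> bool" where
  "loc_ok tr ts st \<longleftrightarrow> 1 \<le> stp st
    \<and> (\<forall>s. stp st < s \<longrightarrow> Rv st s = {})
    \<and> length (ins st) = stp st div 2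
    \<and> length (outs st) = (stp st - 2) div 2
    \<and> (odd (stp st) \<longrightarrow> fstR st = msgs1 (Rv st (stp st - 1)))
    \<and> (\<forall>q < length (outs st). outs st ! q = OUT ts (Rv st (2*q+2)) (Rv st (2*q+3)))
    \<and> (\<forall>s. 2 \<le> s \<longrightarrow> s < stp st \<longrightarrow> tr \<le> card (Rv st s))
    \<and> card (Rv st (stp st)) < tr
    \<and> (\<forall>s. finite (Rv st s))"

lemma loc_ok_init: "0 < tr \<Longrightarrow> loc_ok tr ts init_lstate"
  by (simp add: loc_ok_def init_lstate_def msgs1_def)

lemma L_start:
  assumes ok: "loc_ok tr ts st" and s1: "stp st = 1"
    and e: "tlcb_call app i st = (st', msg)"
  shows "loc_ok tr ts st' \<and> lext st st' \<and> stp st' = 2 \<and> msg = (i, pay st' 2, 2, Rv st' 1) \<and> Rv st' = Rv st"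
proof -
  have r2: "Rv st 2 = {}" using ok s1 by (auto simp: loc_ok_def)
  have i0: "ins st = []" "outs st = []" using ok s1 by (auto simp: loc_ok_def)
  have st'0: "st' = st\<lparr>ins := [app i (outs st)], Rv := (Rv st)(2 := {}), stp := 2\<rparr>"
    using e r2 i0 s1 by (auto simp: tlcb_call_def tlcr_start_def Let_def numeral_2_eq_2)
  have "(Rv st)(2 := {}) = Rv st" using r2 by (simp add: fun_upd_idem)
  then have st': "st' = st\<lparr>ins := [app i (outs st)], Rv := Rv st, stp := 2\<rparr>"
    using st'0 by simp
  have msg: "msg = (i, Inl (app i (outs st)), 2, Rv st 1)"
    using e s1 i0 by (auto simp: tlcb_call_def tlcr_start_def Let_def)
  have tr0: "0 < tr" using ok by (auto simp: loc_ok_def)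
  show ?thesis using ok s1 r2 i0 tr0 unfolding st' msg
    by (auto simp: loc_ok_def lext_def pay_def)
qed

lemma recv_shape:
  assumes "stp st \<le> s' \<longrightarrow> s' \<le> Suc (stp st)"
  shows "\<exists>X. tlcr_recv (j, p, s', R') st = st\<lparr>Rv := (Rv st)(stp st := X)\<rparr> \<and>
     X = (if s' = stp st then insert (j, p) (Rv st (stp st))
          else if s' = Suc (stp st) then Rv st (stp st) \<union> R' else Rv st (stp st))"
  using assms by (auto simp: tlcr_recv_cases)

lemma L_deliver:
  assumes ok: "loc_ok tr ts st" and s2: "2 \<le> stp st"
    and sb: "s' \<le> Suc (stp st)"
    and big: "s' = Suc (stp st) \<Longrightarrow> tr \<le> card R' \<and> finite R'"
    and e: "tlcb_after tr ts app i (tlcr_recv (j, p, s', R') st) = (st2, om)"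
  shows "loc_ok tr ts st2 \<and> lext st st2
     \<and> Rv st2 (stp st) = (if s' = stp st then insert (j, p) (Rv st (stp st))
          else if s' = Suc (stp st) then Rv st (stp st) \<union> R' else Rv st (stp st))
     \<and> (\<forall>s. s \<noteq> stp st \<longrightarrow> Rv st2 s = Rv st s)
     \<and> ((om = None \<and> stp st2 = stp st) \<or>
        (om = Some (i, pay st2 (stp st2), stp st2, Rv st2 (stp st)) \<and> stp st2 = Suc (stp st)))
     \<and> (s' = Suc (stp st) \<longrightarrow> stp st2 = Suc (stp st))"
proof -
  define s where "s = stp st"
  define X where "X = (if s' = stp st then insert (j, p) (Rv st (stp st))
          else if s' = Suc (stp st) then Rv st (stp st) \<union> R' else Rv st (stp st))"
  define st1 where "st1 = st\<lparr>Rv := (Rv st)(s := X)\<rparr>"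
  have st1e: "tlcr_recv (j, p, s', R') st = st1"
    using recv_shape[of st s' j p R'] sb unfolding st1_def X_def s_def by auto
  have fin: "finite X" using ok big unfolding X_def loc_ok_def by auto
  have sub: "Rv st s \<subseteq> X" unfolding X_def s_def by auto
  have ok1: "\<forall>s. stp st < s \<longrightarrow> Rv st s = {}" "length (ins st) = stp st div 2"
     "length (outs st) = (stp st - 2) div 2"
     "odd (stp st) \<longrightarrow> fstR st = msgs1 (Rv st (stp st - 1))"
     "\<forall>q < length (outs st). outs st ! q = OUT ts (Rv st (2*q+2)) (Rv st (2*q+3))"
     "\<forall>s. 2 \<le> s \<longrightarrow> s < stp st \<longrightarrow> tr \<le> card (Rv st s)"
     "card (Rv st (stp st)) < tr" "\<forall>s. finite (Rv st s)"
    using ok unfolding loc_ok_def by auto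
  have tr0: "0 < tr" using ok1(7) by auto
  have bigX: "s' = Suc s \<Longrightarrow> tr \<le> card X"
  proof -
    assume a: "s' = Suc s"
    then have "X = Rv st s \<union> R'" unfolding X_def s_def by auto
    moreover have "finite (Rv st s)" "finite R'" "tr \<le> card R'" using ok1(8) big a s_def by auto
    ultimately show ?thesis by (meson card_mono finite_UnI le_trans sup_ge2)
  qed
  show ?thesis
  proof (cases "card X < tr")
    case True
    then have "tlcb_after tr ts app i st1 = (st1, None)"
      by (intro after_stay) (simp add: st1_def s_def)
    then have "st2 = st1" "om = None" using e st1e by auto
    then show ?thesis using ok ok1 fin sub True bigX
      unfolding st1_def s_def X_def[symmetric]
      by (auto simp: loc_ok_def lext_def)
  next
    case False
    note F = False
    show ?thesis
    proof (cases "even s")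
      case True
      then have "tlcb_after tr ts app i st1 =
         (st1\<lparr>fstR := msgs1 (Rv st1 (stp st1)), Rv := (Rv st1)(Suc (stp st1) := {}), stp := Suc (stp st1)\<rparr>,
           Some (i, Inr (msgs1 (Rv st1 (stp st1))), Suc (stp st1), Rv st1 (stp st1)))"
        using F by (intro after_even) (auto simp: st1_def s_def)
      then have st2: "st2 = st\<lparr>Rv := (Rv st)(s := X), fstR := msgs1 X, stp := Suc s\<rparr>"
        and om: "om = Some (i, Inr (msgs1 X), Suc s, X)"
        using e st1e ok1(1) unfolding st1_def s_def by (auto simp: fun_upd_idem)
      obtain q where sq: "s = 2*q+2"
      proof
        show "s = 2*(s div 2 - 1)+2" using True s2 unfolding s_def by auto
      qed
      have "loc_ok tr ts st2"
        unfolding loc_ok_def st2 using ok1 fin F True s2 sub tr0 sq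
        by (simp add: s_def; intro conjI allI impI; auto simp: less_Suc_eq)
      moreover have "lext st st2" unfolding lext_def st2 using sub by (auto simp: s_def)
      moreover have "pay st2 (Suc s) = Inr (msgs1 X)" using True
        unfolding st2 pay_def by auto
      ultimately show ?thesis using om bigX sub unfolding st2 X_def s_def by auto
    next
      case False
      then have "tlcb_after tr ts app i st1 =
    (let o1 = outs st1 @ [(fstR st1 \<union> \<Union>{X. \<exists>j. (j, Inr X) \<in> Rv st1 (stp st1)},
                  {m. ts \<le> card {j. \<exists>X. (j, Inr X) \<in> Rv st1 (stp st1) \<and> m \<in> X}})];
         m = app i o1 in
    (st1\<lparr>outs := o1, ins := ins st1 @ [m], Rv := (Rv st1)(Suc (stp st1) := {}), stp := Suc (stp st1)\<rparr>,
     Some (i, Inl m, Suc (stp st1), Rv st1 (stp st1))))"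
        using F by (intro after_odd) (auto simp: st1_def s_def)
      then obtain m where st2: "st2 = st\<lparr>Rv := (Rv st)(s := X), outs := outs st @ [OUT ts (Rv st (s - 1)) X],
            ins := ins st @ [m], stp := Suc s\<rparr>"
        and om: "om = Some (i, Inl m, Suc s, X)"
        using e st1e ok1(1,4) False s2 unfolding st1_def s_def
        by (auto simp: fun_upd_idem Let_def OUT_def)
      obtain q where sq: "s = 2*q+3"
      proof
        show "s = 2*(s div 2 - 1)+3" using False s2 unfolding s_def by presburger
      qed
      have lo: "length (outs st) = q" using ok1(3) sq s_def by simp
      have li: "length (ins st) = q + 1" using ok1(2) sq s_def by simp
      have eqs: "stp st2 = Suc s" "Rv st2 = (Rv st)(s := X)" "ins st2 = ins st @ [m]"
         "outs st2 = outs st @ [OUT ts (Rv st (s - 1)) X]" "fstR st2 = fstR st"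
        unfolding st2 by simp_all
      have "loc_ok tr ts st2"
        unfolding loc_ok_def eqs
      proof (intro conjI allI impI)
        show "\<And>s'. Suc s < s' \<Longrightarrow> ((Rv st)(s := X)) s' = {}" using ok1(1) s_def by auto
        show "length (ins st @ [m]) = Suc s div 2" using li sq by simp
        show "length (outs st @ [OUT ts (Rv st (s - 1)) X]) = (Suc s - 2) div 2" using lo sq by simp
        show "odd (Suc s) \<Longrightarrow> fstR st = msgs1 (((Rv st)(s := X)) (Suc s - 1))" using sq by simp
        show "\<And>q'. q' < length (outs st @ [OUT ts (Rv st (s - 1)) X]) \<Longrightarrow>
          (outs st @ [OUT ts (Rv st (s - 1)) X]) ! q' = OUT ts (((Rv st)(s := X)) (2 * q' + 2)) (((Rv st)(s := X)) (2 * q' + 3))"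
        proof -
          fix q' assume "q' < length (outs st @ [OUT ts (Rv st (s - 1)) X])"
          then have "q' < q \<or> q' = q" using lo by auto
          then show "(outs st @ [OUT ts (Rv st (s - 1)) X]) ! q' = OUT ts (((Rv st)(s := X)) (2 * q' + 2)) (((Rv st)(s := X)) (2 * q' + 3))"
          proof
            assume "q' < q"
            then show ?thesis using ok1(5) lo sq by (simp add: nth_append)
          next
            assume "q' = q"
            then show ?thesis using lo sq by (simp add: nth_append)
          qed
        qed
        show "\<And>s'. 2 \<le> s' \<Longrightarrow> s' < Suc s \<Longrightarrow> tr \<le> card (((Rv st)(s := X)) s')"
          using ok1(6) F s_def by (auto simp: less_Suc_eq)
      qed (use ok1 fin tr0 s_def in auto)
      moreover have "lext st st2" unfolding lext_def st2 using sub by (auto simp: s_def)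
      moreover have "pay st2 (Suc s) = Inl m" using sq li
        unfolding st2 pay_def by (auto simp: nth_append)
      ultimately show ?thesis using om bigX sub unfolding st2 X_def s_def by auto
    qed
  qed
qed



definition tinv :: "nat \<Rightarrow> nat \<Rightarrow> nat \<Rightarrow> 'm config \<Rightarrow> bool" where
"tinv n tr ts c \<longleftrightarrow> (\<forall>k. loc_ok tr ts (loc c k))
  \<and> (\<forall>k\<in>{1..n}. \<forall>i\<in>{1..n}. hist c k i = hist_of k (loc c k))
  \<and> (\<forall>k\<in>{1..n}. \<forall>i\<in>{1..n}. dlv c k i \<le> stp (loc c i) - 1 \<and> dlv c k i \<le> stp (loc c k) - 1)
  \<and> (\<forall>i s j p. (j,p) \<in> Rv (loc c i) s \<longrightarrow> j \<in> {1..n} \<and> 2 \<le> s \<and> s \<le> stp (loc c j) \<and> p = pay (loc c j) s)"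

lemma inv_init: "0 < tr \<Longrightarrow> tinv n tr ts init_config"
  using loc_ok_init[of tr ts]
  by (simp add: tinv_def init_config_def hist_of_def init_lstate_def)

lemma length_hist_of[simp]: "length (hist_of k st) = stp st - 1"
  by (simp add: hist_of_def)

lemma nth_hist_of: "d < stp st - 1 \<Longrightarrow> hist_of k st ! d = (k, pay st (d+2), d+2, Rv st (d+1))"
  by (simp add: hist_of_def)

lemma inv_update:
  assumes I: "tinv n tr ts c" and L: "loc c' = (loc c)(i := st')"
    and ok: "loc_ok tr ts st'" and ex: "lext (loc c i) st'"
    and H: "\<forall>k\<in>{1..n}. \<forall>b\<in>{1..n}. hist c' k b = hist_of k (loc c' k)"
    and D: "\<forall>k\<in>{1..n}. \<forall>b\<in>{1..n}. dlv c' k b \<le> stp (loc c' b) - 1 \<and> dlv c' k b \<le> stp (loc c' k) - 1"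
    and N: "\<forall>s j p. (j,p) \<in> Rv st' s \<longrightarrow> (j,p) \<notin> Rv (loc c i) s \<longrightarrow>
              j \<in> {1..n} \<and> 2 \<le> s \<and> s \<le> stp (loc c j) \<and> p = pay (loc c j) s"
  shows "tinv n tr ts c'"
proof -
  have okc: "\<And>k. loc_ok tr ts (loc c k)" using I by (auto simp: tinv_def)
  have tr: "\<And>j s. 2 \<le> s \<Longrightarrow> s \<le> stp (loc c j) \<Longrightarrow> s \<le> stp (loc c' j) \<and> pay (loc c' j) s = pay (loc c j) s"
  proof -
    fix j s assume a: "2 \<le> s" "s \<le> stp (loc c j)"
    show "s \<le> stp (loc c' j) \<and> pay (loc c' j) s = pay (loc c j) s"
    proof (cases "j = i")
      case True
      have "length (ins (loc c i)) = stp (loc c i) div 2" using okc[of i] by (simp add: loc_ok_def)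
      then show ?thesis using True a ex L pay_ext[of "loc c i" st' s] by (auto simp: lext_def)
    qed (use L a in auto)
  qed
  have C: "\<forall>i' s j p. (j,p) \<in> Rv (loc c' i') s \<longrightarrow> j \<in> {1..n} \<and> 2 \<le> s \<and> s \<le> stp (loc c' j) \<and> p = pay (loc c' j) s"
  proof (intro allI impI)
    fix i' s j p assume m: "(j,p) \<in> Rv (loc c' i') s"
    have old: "j \<in> {1..n} \<and> 2 \<le> s \<and> s \<le> stp (loc c j) \<and> p = pay (loc c j) s"
    proof (cases "i' = i \<and> (j,p) \<notin> Rv (loc c i) s")
      case True
      then show ?thesis using N m L by auto
    next
      case False
      then have "(j,p) \<in> Rv (loc c i') s" using m L by (cases "i' = i") auto
      then show ?thesis using I unfolding tinv_def by blast
    qed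
    then show "j \<in> {1..n} \<and> 2 \<le> s \<and> s \<le> stp (loc c' j) \<and> p = pay (loc c' j) s"
      using tr[of s j] by auto
  qed
  show ?thesis unfolding tinv_def using okc ok L H D C by auto
qed

lemma ext_stp: "lext a b \<Longrightarrow> stp a \<le> stp b" by (simp add: lext_def)

lemma inv_crash:
  assumes I: "tinv n tr ts c"
  shows "tinv n tr ts (crash_act i c)"
proof -
  let ?st' = "(loc c i)\<lparr>crashed := True\<rparr>"
  have h: "hist_of k ?st' = hist_of k (loc c i)" for k
    by (simp add: hist_of_def pay_def)
  have okc: "loc_ok tr ts (loc c i)" using I by (auto simp: tinv_def)
  show ?thesis
  proof (rule inv_update[OF I, of _ i ?st'])
    show "loc (crash_act i c) = (loc c)(i := ?st')" by (simp add: crash_act_def set_loc_def)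
    show "loc_ok tr ts ?st'" using okc by (simp add: loc_ok_def)
    show "lext (loc c i) ?st'" by (simp add: lext_def)
    show "\<forall>k\<in>{1..n}. \<forall>b\<in>{1..n}. hist (crash_act i c) k b = hist_of k (loc (crash_act i c) k)"
      using I h by (auto simp: tinv_def crash_act_def set_loc_def)
    show "\<forall>k\<in>{1..n}. \<forall>b\<in>{1..n}. dlv (crash_act i c) k b \<le> stp (loc (crash_act i c) b) - 1 \<and>
       dlv (crash_act i c) k b \<le> stp (loc (crash_act i c) k) - 1"
      using I by (auto simp: tinv_def crash_act_def set_loc_def)
  qed auto
qed

lemma inv_start:
  assumes I: "tinv n tr ts c" and i: "i \<in> {1..n}" and s1: "stp (loc c i) = 1"
  shows "tinv n tr ts (start_act n app i c)"
proof -
  obtain st' msg where e: "tlcb_call app i (loc c i) = (st', msg)" by (cases "tlcb_call app i (loc c i)")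
  have okc: "\<And>k. loc_ok tr ts (loc c k)" using I by (auto simp: tinv_def)
  have Ls: "loc_ok tr ts st' \<and> lext (loc c i) st' \<and> stp st' = 2 \<and> msg = (i, pay st' 2, 2, Rv st' 1) \<and> Rv st' = Rv (loc c i)"
    using L_start[OF okc s1 e] .
  have c': "start_act n app i c = send_all n i msg (set_loc i st' c)"
    by (simp add: start_act_def e)
  have li: "length (ins (loc c i)) = stp (loc c i) div 2" using okc[of i] by (simp add: loc_ok_def)
  have hs: "hist_of i st' = hist_of i (loc c i) @ [msg]"
    using hist_of_suc[of "loc c i" st' i] Ls li s1 by auto
  show ?thesis
  proof (rule inv_update[OF I, of _ i st'])
    show "loc (start_act n app i c) = (loc c)(i := st')" by (simp add: c' send_all_def set_loc_def)
    show "\<forall>k\<in>{1..n}. \<forall>b\<in>{1..n}. hist (start_act n app i c) k b = hist_of k (loc (start_act n app i c) k)"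
      using I hs by (auto simp: tinv_def c' send_all_def set_loc_def)
    show "\<forall>k\<in>{1..n}. \<forall>b\<in>{1..n}. dlv (start_act n app i c) k b \<le> stp (loc (start_act n app i c) b) - 1 \<and>
       dlv (start_act n app i c) k b \<le> stp (loc (start_act n app i c) k) - 1"
    proof (intro ballI)
      fix k b assume kb: "k \<in> {1..n}" "b \<in> {1..n}"
      have m: "\<And>x. stp (loc c x) \<le> stp (loc (start_act n app i c) x)"
        using Ls by (simp add: c' send_all_def set_loc_def lext_def)
      have "dlv c k b \<le> stp (loc c b) - 1 \<and> dlv c k b \<le> stp (loc c k) - 1" using I kb by (simp add: tinv_def)
      moreover have "dlv (start_act n app i c) k b = dlv c k b" by (simp add: c' send_all_def set_loc_def)
      ultimately show "dlv (start_act n app i c) k b \<le> stp (loc (start_act n app i c) b) - 1 \<and>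
       dlv (start_act n app i c) k b \<le> stp (loc (start_act n app i c) k) - 1"
        using m[of k] m[of b] by linarith
    qed
  qed (use Ls in auto)
qed


lemma inv_deliver:
  assumes I: "tinv n tr ts c" and i: "i \<in> {1..n}" and k: "k \<in> {1..n}"
    and s2: "2 \<le> stp (loc c i)" and dl: "dlv c k i < length (hist c k i)"
  shows "tinv n tr ts (deliver_act n tr ts app k i c) \<and>
     (\<forall>j. lext (loc c j) (loc (deliver_act n tr ts app k i c) j)) \<and>
     dlv (deliver_act n tr ts app k i c) = (dlv c)(k := (dlv c k)(i := Suc (dlv c k i))) \<and>
     (dlv c k i + 2 = stp (loc c i) \<longrightarrow> (k, pay (loc c k) (stp (loc c i))) \<in> Rv (loc (deliver_act n tr ts app k i c) i) (stp (loc c i)))"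
proof -
  define d where "d = dlv c k i"
  define st where "st = loc c i"
  have okc: "\<And>k. loc_ok tr ts (loc c k)" using I by (auto simp: tinv_def)
  have hk: "hist c k i = hist_of k (loc c k)" using I i k by (auto simp: tinv_def)
  have dk: "d < stp (loc c k) - 1" using dl hk d_def by simp
  have msg: "hist c k i ! d = (k, pay (loc c k) (d+2), d+2, Rv (loc c k) (d+1))"
    using hk dk nth_hist_of by simp
  have Dc: "d \<le> stp st - 1" using I i k unfolding tinv_def d_def st_def by auto
  obtain st2 om where e: "tlcb_after tr ts app i (tlcr_recv (k, pay (loc c k) (d+2), d+2, Rv (loc c k) (d+1)) st) = (st2, om)"
    by (cases "tlcb_after tr ts app i (tlcr_recv (k, pay (loc c k) (d+2), d+2, Rv (loc c k) (d+1)) st)")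
  have big: "d+2 = Suc (stp st) \<Longrightarrow> tr \<le> card (Rv (loc c k) (d+1)) \<and> finite (Rv (loc c k) (d+1))"
  proof -
    assume a: "d+2 = Suc (stp st)"
    then have "2 \<le> d+1" "d+1 < stp (loc c k)" using s2 dk st_def by auto
    then show ?thesis using okc[of k] unfolding loc_ok_def by blast
  qed
  have LD: "loc_ok tr ts st2 \<and> lext st st2
     \<and> Rv st2 (stp st) = (if d+2 = stp st then insert (k, pay (loc c k) (d+2)) (Rv st (stp st))
          else if d+2 = Suc (stp st) then Rv st (stp st) \<union> Rv (loc c k) (d+1) else Rv st (stp st))
     \<and> (\<forall>s. s \<noteq> stp st \<longrightarrow> Rv st2 s = Rv st s)
     \<and> ((om = None \<and> stp st2 = stp st) \<or>
        (om = Some (i, pay st2 (stp st2), stp st2, Rv st2 (stp st)) \<and> stp st2 = Suc (stp st)))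
     \<and> (d+2 = Suc (stp st) \<longrightarrow> stp st2 = Suc (stp st))"
    by (rule L_deliver[OF okc[of i, folded st_def] s2[folded st_def] _ big e]) (use Dc s2 st_def in auto)
  define c1 where "c1 = c\<lparr>dlv := (dlv c)(k := (dlv c k)(i := Suc (dlv c k i)))\<rparr>"
  have c': "deliver_act n tr ts app k i c = (case om of None \<Rightarrow> set_loc i st2 c1 | Some msg' \<Rightarrow> send_all n i msg' (set_loc i st2 c1))"
    unfolding deliver_act_def Let_def c1_def msg d_def[symmetric] st_def[symmetric] using e by simp
  define c' where "c' = deliver_act n tr ts app k i c"
  have cl: "loc c' = (loc c)(i := st2)" unfolding c'_def c' by (cases om) (auto simp: send_all_def set_loc_def c1_def)
  have cd: "dlv c' = (dlv c)(k := (dlv c k)(i := Suc d))" unfolding c'_def c' d_def by (cases om) (auto simp: send_all_def set_loc_def c1_def)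
  have ch: "\<And>a b. hist c' a b = (case om of None \<Rightarrow> hist c a b | Some msg' \<Rightarrow> (if a = i \<and> b \<in> {1..n} then hist c a b @ [msg'] else hist c a b))"
    unfolding c'_def c' by (cases om) (simp_all add: send_all_def set_loc_def c1_def)
  have li: "length (ins st) = stp st div 2" using okc[of i] by (simp add: loc_ok_def st_def)
  have mono: "\<And>x. stp (loc c x) \<le> stp (loc c' x)" using LD cl st_def by (auto simp: lext_def)
  have "tinv n tr ts c'"
  proof (rule inv_update[OF I cl])
    show "loc_ok tr ts st2" "lext (loc c i) st2" using LD st_def by auto
    show "\<forall>a\<in>{1..n}. \<forall>b\<in>{1..n}. hist c' a b = hist_of a (loc c' a)"
    proof (intro ballI)
      fix a b assume ab: "a \<in> {1..n}" "b \<in> {1..n}"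
      have old: "hist c a b = hist_of a (loc c a)" using I ab by (auto simp: tinv_def)
      show "hist c' a b = hist_of a (loc c' a)"
      proof (cases "a = i")
        case False
        then show ?thesis using old ch cl by (cases om) auto
      next
        case True
        show ?thesis
        proof (cases om)
          case None
          then have "stp st2 = stp st" using LD by auto
          then have "hist_of a st2 = hist_of a st" using hist_of_same[of st st2 a] LD li by auto
          then show ?thesis using None ch cl old True st_def by auto
        next
          case (Some msg')
          then have "stp st2 = Suc (stp st)" "msg' = (i, pay st2 (stp st2), stp st2, Rv st2 (stp st))" using LD by auto
          moreover have "1 \<le> stp st" using s2 st_def by auto
          ultimately have "hist_of a st2 = hist_of a st @ [msg']" using hist_of_suc[of st st2 a] LD li True by auto
          then show ?thesis using Some ch cl old True st_def ab by auto
        qed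
      qed
    qed
    show "\<forall>a\<in>{1..n}. \<forall>b\<in>{1..n}. dlv c' a b \<le> stp (loc c' b) - 1 \<and> dlv c' a b \<le> stp (loc c' a) - 1"
    proof (intro ballI)
      fix a b assume ab: "a \<in> {1..n}" "b \<in> {1..n}"
      show "dlv c' a b \<le> stp (loc c' b) - 1 \<and> dlv c' a b \<le> stp (loc c' a) - 1"
      proof (cases "a = k \<and> b = i")
        case False
        then have "dlv c' a b = dlv c a b" using cd by auto
        moreover have "dlv c a b \<le> stp (loc c b) - 1 \<and> dlv c a b \<le> stp (loc c a) - 1" using I ab by (simp add: tinv_def)
        ultimately show ?thesis using mono[of a] mono[of b] by linarith
      next
        case True
        then have dv: "dlv c' a b = Suc d" using cd by auto
        have "Suc d \<le> stp (loc c' i) - 1"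
        proof (cases "d+2 = Suc (stp st)")
          case True
          then show ?thesis using LD cl by auto
        next
          case False
          then show ?thesis using Dc mono[of i] st_def s2 by auto
        qed
        moreover have "Suc d \<le> stp (loc c' k) - 1" using dk mono[of k] by auto
        ultimately show ?thesis using dv True by auto
      qed
    qed
    show "\<forall>s j p. (j,p) \<in> Rv st2 s \<longrightarrow> (j,p) \<notin> Rv (loc c i) s \<longrightarrow>
              j \<in> {1..n} \<and> 2 \<le> s \<and> s \<le> stp (loc c j) \<and> p = pay (loc c j) s"
    proof (intro allI impI)
      fix s j p assume a: "(j,p) \<in> Rv st2 s" "(j,p) \<notin> Rv (loc c i) s"
      then have ss: "s = stp st" using LD st_def by fastforce
      show "j \<in> {1..n} \<and> 2 \<le> s \<and> s \<le> stp (loc c j) \<and> p = pay (loc c j) s"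
      proof (cases "d+2 = stp st")
        case True
        then have "(j,p) = (k, pay (loc c k) (d+2))" using a LD ss st_def by auto
        then show ?thesis using True ss k dk s2 st_def by auto
      next
        case False
        then have "d+2 = Suc (stp st)" "(j,p) \<in> Rv (loc c k) (d+1)" using a LD ss st_def by (auto split: if_splits)
        then have "(j,p) \<in> Rv (loc c k) s" using ss by simp
        then show ?thesis using I unfolding tinv_def by blast
      qed
    qed
  qed
  moreover have "\<forall>j. lext (loc c j) (loc c' j)" using cl LD st_def ext_refl by auto
  moreover have "dlv c k i + 2 = stp (loc c i) \<longrightarrow> (k, pay (loc c k) (stp (loc c i))) \<in> Rv (loc c' i) (stp (loc c i))"
    using LD cl st_def d_def by auto
  ultimately show ?thesis using cd d_def unfolding c'_def by auto
qed

lemma inv_step: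
  assumes "tinv n tr ts c" "tlcb_step n tr ts app c c'"
  shows "tinv n tr ts c'"
  using assms unfolding tlcb_step_def
  by (auto intro: inv_crash inv_start dest: inv_deliver)

lemma inv_all:
  assumes "tlcb_execution n tr ts app c" "0 < tr"
  shows "tinv n tr ts (c t)"
proof (induction t)
  case 0 then show ?case using assms inv_init by (auto simp: tlcb_execution_def)
next
  case (Suc t)
  have "tlcb_step n tr ts app (c t) (c (Suc t))" using assms by (auto simp: tlcb_execution_def)
  then show ?case using inv_step[OF Suc.IH] by blast
qed

lemma step_facts:
  assumes I: "tinv n tr ts c" and S: "tlcb_step n tr ts app c c'"
  shows "(\<forall>j. lext (loc c j) (loc c' j)) \<and> (\<forall>a b. dlv c a b \<le> dlv c' a b) \<and>
    (\<forall>a b. dlv c a b < dlv c' a b \<longrightarrow> dlv c' a b = Suc (dlv c a b) \<and> dlv c a b < length (hist c a b) \<and>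
       (dlv c a b + 2 = stp (loc c b) \<longrightarrow> (a, pay (loc c a) (stp (loc c b))) \<in> Rv (loc c' b) (stp (loc c b))))"
proof -
  consider "c' = c" | i where "c' = crash_act i c" | i where "i \<in> {1..n}" "stp (loc c i) = 1" "c' = start_act n app i c"
    | i k where "i \<in> {1..n}" "k \<in> {1..n}" "2 \<le> stp (loc c i)" "dlv c k i < length (hist c k i)" "c' = deliver_act n tr ts app k i c"
    using S unfolding tlcb_step_def by blast
  then show ?thesis
  proof cases
    case 1 then show ?thesis by (auto simp: ext_refl)
  next
    case (2 i) then show ?thesis by (auto simp: crash_act_def set_loc_def lext_def)
  next
    case (3 i)
    obtain st' msg where e: "tlcb_call app i (loc c i) = (st', msg)" by (cases "tlcb_call app i (loc c i)")
    have okc: "\<And>k. loc_ok tr ts (loc c k)" using I by (auto simp: tinv_def)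
    have "lext (loc c i) st'" using L_start[OF okc 3(2) e] by auto
    then show ?thesis using 3(3) e by (auto simp: start_act_def send_all_def set_loc_def ext_refl)
  next
    case (4 i k)
    show ?thesis using inv_deliver[OF I 4(1,2,3,4), of app] 4(4,5) by auto
  qed
qed

lemma exec_inv: "tlcb_execution n tr ts app c \<Longrightarrow> 0 < tr \<Longrightarrow> tinv n tr ts (c t)"
  by (rule inv_all)

lemma exec_step: "tlcb_execution n tr ts app c \<Longrightarrow> tlcb_step n tr ts app (c t) (c (Suc t))"
  by (simp add: tlcb_execution_def)

lemma ext_mono:
  assumes E: "tlcb_execution n tr ts app c" and tr: "0 < tr" and le: "t \<le> t'"
  shows "lext (loc (c t) j) (loc (c t') j)"
  using le
proof (induction t' rule: dec_induct)
  case base then show ?case by (rule ext_refl)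
next
  case (step m)
  have "lext (loc (c m) j) (loc (c (Suc m)) j)"
    using step_facts[OF exec_inv[OF E tr] exec_step[OF E]] by blast
  then show ?case using step.IH ext_trans by blast
qed

lemma dlv_mono:
  assumes E: "tlcb_execution n tr ts app c" and tr: "0 < tr" and le: "t \<le> t'"
  shows "dlv (c t) a b \<le> dlv (c t') a b"
  using le
proof (induction t' rule: dec_induct)
  case base then show ?case by simp
next
  case (step m)
  have "dlv (c m) a b \<le> dlv (c (Suc m)) a b"
    using step_facts[OF exec_inv[OF E tr] exec_step[OF E]] by blast
  then show ?case using step.IH by linarith
qed



lemma inv_loc: "tinv n tr ts c \<Longrightarrow> loc_ok tr ts (loc c k)" by (simp add: tinv_def)

lemma inv_content: "tinv n tr ts c \<Longrightarrow> (j,p) \<in> Rv (loc c i) s \<Longrightarrow>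
   j \<in> {1..n} \<and> 2 \<le> s \<and> s \<le> stp (loc c j) \<and> p = pay (loc c j) s"
  unfolding tinv_def by blast

lemma inj_fst_Rv: "tinv n tr ts c \<Longrightarrow> inj_on fst (Rv (loc c i) s)"
  unfolding inj_on_def by (metis inv_content prod.collapse)

lemma card_fst_Rv: "tinv n tr ts c \<Longrightarrow> card (fst ` Rv (loc c i) s) = card (Rv (loc c i) s)"
  using inj_fst_Rv card_image by blast

lemma fst_Rv_sub: "tinv n tr ts c \<Longrightarrow> fst ` Rv (loc c i) s \<subseteq> {1..n}"
  using inv_content by fastforce

lemma bcast_iff:
  assumes E: "tlcb_execution n tr ts app c" and tr: "0 < tr"
    and s: "1 \<le> s" "s \<le> length (ins (loc (c t) j))"
  shows "broadcast_in c j s m \<longleftrightarrow> m = ins (loc (c t) j) ! (s - 1)"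
proof
  assume "m = ins (loc (c t) j) ! (s - 1)"
  then show "broadcast_in c j s m" using s unfolding broadcast_in_def by blast
next
  assume "broadcast_in c j s m"
  then obtain t' where t': "s \<le> length (ins (loc (c t') j))" "ins (loc (c t') j) ! (s - 1) = m"
    unfolding broadcast_in_def by blast
  show "m = ins (loc (c t) j) ! (s - 1)"
  proof (cases "t \<le> t'")
    case True
    then obtain xs where "ins (loc (c t') j) = ins (loc (c t) j) @ xs"
      using ext_mono[OF E tr True, of j] by (auto simp: lext_def)
    moreover have "s - 1 < length (ins (loc (c t) j))" using s by linarith
    ultimately show ?thesis using t' by (simp add: nth_append)
  next
    case False
    then obtain xs where "ins (loc (c t) j) = ins (loc (c t') j) @ xs"
      using ext_mono[OF E tr, of t' t j] by (auto simp: lext_def)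
    moreover have "s - 1 < length (ins (loc (c t') j))" using s t' by linarith
    ultimately show ?thesis using t' by (simp add: nth_append)
  qed
qed

lemma M1:
  fixes t x s
  assumes E: "tlcb_execution n tr ts app c" and tr: "0 < tr"
  defines "R \<equiv> Rv (loc (c t) x) (2*s)"
  shows "msgs1 R = msgs_of c (fst ` R) s \<and> (\<forall>j\<in>fst ` R. \<exists>m. broadcast_in c j s m)"
proof -
  have I: "tinv n tr ts (c t)" by (rule exec_inv[OF E tr])
  have ent: "(j,p) \<in> R \<Longrightarrow> 1 \<le> s \<and> s \<le> length (ins (loc (c t) j)) \<and> p = Inl (ins (loc (c t) j) ! (s-1))" for j p
  proof -
    assume "(j,p) \<in> R"
    then have a: "2 \<le> 2*s" "2*s \<le> stp (loc (c t) j)" "p = pay (loc (c t) j) (2*s)"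
      using inv_content[OF I] unfolding R_def by blast+
    have "length (ins (loc (c t) j)) = stp (loc (c t) j) div 2" using inv_loc[OF I] by (simp add: loc_ok_def)
    then show ?thesis using a by (auto simp: pay_def)
  qed
  have "msgs1 R = msgs_of c (fst ` R) s"
  proof (rule set_eqI)
    fix m
    show "m \<in> msgs1 R \<longleftrightarrow> m \<in> msgs_of c (fst ` R) s"
    proof
      assume "m \<in> msgs1 R"
      then obtain j where j: "(j, Inl m) \<in> R" by (auto simp: msgs1_def)
      then have "broadcast_in c j s m" using ent[OF j] bcast_iff[OF E tr] by auto
      then show "m \<in> msgs_of c (fst ` R) s" using j unfolding msgs_of_def by force
    next
      assume "m \<in> msgs_of c (fst ` R) s"
      then obtain j p where j: "(j,p) \<in> R" "broadcast_in c j s m" unfolding msgs_of_def by auto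
      then have "m = ins (loc (c t) j) ! (s-1)" "p = Inl (ins (loc (c t) j) ! (s-1))"
        using ent[OF j(1)] bcast_iff[OF E tr] by auto
      then show "m \<in> msgs1 R" using j unfolding msgs1_def by auto
    qed
  qed
  moreover have "\<forall>j\<in>fst ` R. \<exists>m. broadcast_in c j s m"
    using ent bcast_iff[OF E tr] by fastforce
  ultimately show ?thesis by blast
qed

lemma returns_stable:
  assumes E: "tlcb_execution n tr ts app c" and tr: "0 < tr" and r: "returns_at c i s R B" and s1: "1 \<le> s"
  shows "\<exists>t0. \<forall>t\<ge>t0. s \<le> length (outs (loc (c t) i)) \<and> outs (loc (c t) i) ! (s - 1) = (R, B)"
proof -
  obtain t0 where t0: "s \<le> length (outs (loc (c t0) i))" "outs (loc (c t0) i) ! (s - 1) = (R, B)"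
    using r unfolding returns_at_def by blast
  have "s \<le> length (outs (loc (c t) i)) \<and> outs (loc (c t) i) ! (s - 1) = (R, B)" if le: "t0 \<le> t" for t
  proof -
    obtain xs where "outs (loc (c t) i) = outs (loc (c t0) i) @ xs"
      using ext_mono[OF E tr le, of i] by (auto simp: lext_def)
    moreover have "s - 1 < length (outs (loc (c t0) i))" using s1 t0 by linarith
    ultimately show ?thesis using t0 by (auto simp: nth_append)
  qed
  then show ?thesis by blast
qed

lemma out_at:
  assumes I: "tinv n tr ts c" and s: "1 \<le> s" "s \<le> length (outs (loc c i))"
  shows "outs (loc c i) ! (s - 1) = OUT ts (Rv (loc c i) (2*s)) (Rv (loc c i) (2*s+1))
     \<and> 2*s+1 < stp (loc c i)"
proof -
  have ok: "loc_ok tr ts (loc c i)" by (rule inv_loc[OF I])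
  obtain q where q: "s = Suc q" using s by (cases s) auto
  have "outs (loc c i) ! (s - 1) = OUT ts (Rv (loc c i) (2*(s-1)+2)) (Rv (loc c i) (2*(s-1)+3))"
    using s ok unfolding loc_ok_def by auto
  moreover have "2*s+1 < stp (loc c i)" using ok s unfolding loc_ok_def by auto
  ultimately show ?thesis unfolding q by (simp add: numeral_3_eq_3)
qed

lemma inr_entry:
  assumes I: "tinv n tr ts c" and m: "(k, p) \<in> Rv (loc c i) (2*s+1)"
  shows "p = Inr (msgs1 (Rv (loc c k) (2*s))) \<and> 2*s < stp (loc c k) \<and> k \<in> {1..n} \<and> 1 \<le> s"
  using inv_content[OF I m] by (auto simp: pay_def)

lemma card_big:
  assumes I: "tinv n tr ts c" and s: "1 \<le> s" "s' < stp (loc c k)" "2 \<le> s'"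
  shows "tr \<le> card (Rv (loc c k) s')"
  using inv_loc[OF I, of k] s unfolding loc_ok_def by auto



lemma arith_core:
  fixes a K n tr ts tb :: nat
  assumes an: "a \<le> n" and K: "tr \<le> K" and trn: "tr \<le> n" and tstr: "ts \<le> tr" and ts0: "0 < ts"
    and cnt: "K * tr \<le> a * K + (n - a) * (ts - 1)"
    and tb: "real tb \<le> real n - real tr * real (n - tr) / real (tr - ts + 1)"
  shows "tb \<le> a"
proof -
  define t where "t = ts - 1"
  have D0: "real (tr - ts + 1) = real tr - real t" using tstr ts0 t_def by auto
  have Dpos: "real tr - real t > 0" using tstr ts0 t_def by auto
  have tn: "real t \<le> real n" using tstr trn t_def by auto
  have key: "real a * (real tr - real t) \<ge> real tr * real tr - real n * real t"
  proof (cases "tr \<le> a")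
    case True
    then have "real a * (real tr - real t) \<ge> real tr * (real tr - real t)"
      using Dpos by (intro mult_right_mono) auto
    moreover have "real tr * real t \<le> real n * real t" using trn by (intro mult_right_mono) auto
    ultimately show ?thesis by (simp add: algebra_simps)
  next
    case False
    have c: "real K * real tr \<le> real a * real K + (real n - real a) * real t"
      using cnt an unfolding t_def[symmetric] by (metis of_nat_add of_nat_diff of_nat_le_iff of_nat_mult)
    have "real tr * (real tr - real a) \<le> real K * (real tr - real a)"
      using K False by (intro mult_right_mono) auto
    then have "real tr * (real tr - real a) \<le> (real n - real a) * real t" using c by (simp add: algebra_simps)
    then show ?thesis by (simp add: algebra_simps)
  qed
  have "real n - real tr * real (n - tr) / real (tr - ts + 1)
      = (real tr * real tr - real n * real t) / (real tr - real t)"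
    using Dpos trn unfolding D0 by (simp add: field_simps of_nat_diff)
  also have "\<dots> \<le> real a" using key Dpos by (simp add: divide_le_eq mult.commute)
  finally show ?thesis using tb by linarith
qed


lemma bc_fun:
  assumes E: "tlcb_execution n tr ts app c" and tr: "0 < tr" and s: "1 \<le> s"
    and a: "broadcast_in c j s m" and b: "broadcast_in c j s m'"
  shows "m = m'"
proof -
  obtain t where t: "s \<le> length (ins (loc (c t) j))" "ins (loc (c t) j) ! (s - 1) = m"
    using a unfolding broadcast_in_def by blast
  then show ?thesis using bcast_iff[OF E tr s t(1)] b by simp
qed

lemma inr_set:
  assumes I: "tinv n tr ts c"
  shows "\<Union>{X. \<exists>j. (j, Inr X) \<in> Rv (loc c i) (2*s+1)} = (\<Union>k\<in>fst ` Rv (loc c i) (2*s+1). msgs1 (Rv (loc c k) (2*s)))"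
proof (rule set_eqI)
  fix m
  show "m \<in> \<Union>{X. \<exists>j. (j, Inr X) \<in> Rv (loc c i) (2*s+1)} \<longleftrightarrow> m \<in> (\<Union>k\<in>fst ` Rv (loc c i) (2*s+1). msgs1 (Rv (loc c k) (2*s)))"
  proof
    assume "m \<in> \<Union>{X. \<exists>j. (j, Inr X) \<in> Rv (loc c i) (2*s+1)}"
    then obtain j X where "(j, Inr X) \<in> Rv (loc c i) (2*s+1)" "m \<in> X" by blast
    then show "m \<in> (\<Union>k\<in>fst ` Rv (loc c i) (2*s+1). msgs1 (Rv (loc c k) (2*s)))"
      using inr_entry[OF I] by force
  next
    assume "m \<in> (\<Union>k\<in>fst ` Rv (loc c i) (2*s+1). msgs1 (Rv (loc c k) (2*s)))"
    then obtain k p where "(k,p) \<in> Rv (loc c i) (2*s+1)" "m \<in> msgs1 (Rv (loc c k) (2*s))" by auto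
    then show "m \<in> \<Union>{X. \<exists>j. (j, Inr X) \<in> Rv (loc c i) (2*s+1)}"
      using inr_entry[OF I] by blast
  qed
qed

lemma recv_thr:
  assumes E: "tlcb_execution n tr ts app c" and tr: "0 < tr" and s: "1 \<le> s"
    and r: "returns_at c i s R B"
  shows "threshold_set n c s tr R"
proof -
  obtain t0 where t0: "\<forall>t\<ge>t0. s \<le> length (outs (loc (c t) i)) \<and> outs (loc (c t) i) ! (s - 1) = (R, B)"
    using returns_stable[OF E tr r s] by blast
  define t where "t = t0"
  have I: "tinv n tr ts (c t)" by (rule exec_inv[OF E tr])
  have o: "s \<le> length (outs (loc (c t) i))" "outs (loc (c t) i) ! (s - 1) = (R, B)" using t0 t_def by auto
  define R1 where "R1 = Rv (loc (c t) i) (2*s)"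
  define R2 where "R2 = Rv (loc (c t) i) (2*s+1)"
  have OA: "(R, B) = OUT ts R1 R2" "2*s+1 < stp (loc (c t) i)" using out_at[OF I s o(1)] o(2) R1_def R2_def by auto
  have RR: "R = msgs1 R1 \<union> (\<Union>k\<in>fst ` R2. msgs1 (Rv (loc (c t) k) (2*s)))"
    using OA(1) inr_set[OF I, of i s] unfolding OUT_def R2_def by auto
  define N where "N = fst ` R1 \<union> (\<Union>k\<in>fst ` R2. fst ` Rv (loc (c t) k) (2*s))"
  have msgsU: "msgs_of c N s = msgs_of c (fst ` R1) s \<union> (\<Union>k\<in>fst ` R2. msgs_of c (fst ` Rv (loc (c t) k) (2*s)) s)"
    unfolding N_def msgs_of_def by blast
  have "R = msgs_of c N s" unfolding RR msgsU R1_def using M1[OF E tr] by simp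
  moreover have "N \<subseteq> {1..n}" unfolding N_def R1_def using fst_Rv_sub[OF I] by blast
  moreover have "\<forall>j\<in>N. \<exists>m. broadcast_in c j s m" unfolding N_def R1_def using M1[OF E tr] by blast
  moreover have "tr \<le> card N"
  proof -
    have "tr \<le> card R1" unfolding R1_def using card_big[OF I s, of "2*s"] OA(2) s by auto
    also have "\<dots> = card (fst ` R1)" unfolding R1_def using card_fst_Rv[OF I] by simp
    also have "\<dots> \<le> card N" using \<open>N \<subseteq> {1..n}\<close> by (intro card_mono) (auto intro: finite_subset simp: N_def)
    finally show ?thesis .
  qed
  ultimately show ?thesis unfolding threshold_set_def by blast
qed


lemma common_time:
  assumes E: "tlcb_execution n tr ts app c" and tr: "0 < tr" and s: "1 \<le> s"
    and r1: "returns_at c i s R B" and r2: "returns_at c j s R' B'"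
  obtains t where "s \<le> length (outs (loc (c t) i))" "outs (loc (c t) i) ! (s - 1) = (R, B)"
     "s \<le> length (outs (loc (c t) j))" "outs (loc (c t) j) ! (s - 1) = (R', B')"
proof -
  obtain t1 where t1: "\<forall>t\<ge>t1. s \<le> length (outs (loc (c t) i)) \<and> outs (loc (c t) i) ! (s - 1) = (R, B)"
    using returns_stable[OF E tr r1 s] by blast
  obtain t2 where t2: "\<forall>t\<ge>t2. s \<le> length (outs (loc (c t) j)) \<and> outs (loc (c t) j) ! (s - 1) = (R', B')"
    using returns_stable[OF E tr r2 s] by blast
  show ?thesis using that t1 t2 by (meson max.cobounded1 max.cobounded2)
qed

lemma spread:
  assumes E: "tlcb_execution n tr ts app c" and tr: "0 < tr" and s: "1 \<le> s"
    and nts: "n < tr + ts"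
    and r1: "returns_at c i s R B" and mB: "m \<in> B" and r2: "returns_at c j s R' B'"
  shows "m \<in> R'"
proof -
  obtain t where o: "s \<le> length (outs (loc (c t) i))" "outs (loc (c t) i) ! (s - 1) = (R, B)"
     "s \<le> length (outs (loc (c t) j))" "outs (loc (c t) j) ! (s - 1) = (R', B')"
    using common_time[OF E tr s r1 r2] by blast
  have I: "tinv n tr ts (c t)" by (rule exec_inv[OF E tr])
  define R2i where "R2i = Rv (loc (c t) i) (2*s+1)"
  define R2j where "R2j = Rv (loc (c t) j) (2*s+1)"
  have OAi: "(R, B) = OUT ts (Rv (loc (c t) i) (2*s)) R2i" "2*s+1 < stp (loc (c t) i)"
    using out_at[OF I s o(1)] o(2) R2i_def by auto
  have OAj: "(R', B') = OUT ts (Rv (loc (c t) j) (2*s)) R2j" "2*s+1 < stp (loc (c t) j)"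
    using out_at[OF I s o(3)] o(4) R2j_def by auto
  define A where "A = {k. \<exists>X. (k, Inr X) \<in> R2i \<and> m \<in> X}"
  have tsA: "ts \<le> card A" using mB OAi(1) unfolding OUT_def A_def by auto
  have Asub: "A \<subseteq> {1..n}" unfolding A_def R2i_def using fst_Rv_sub[OF I] by force
  define Kj where "Kj = fst ` R2j"
  have Ksub: "Kj \<subseteq> {1..n}" unfolding Kj_def R2j_def using fst_Rv_sub[OF I] by blast
  have trK: "tr \<le> card Kj"
  proof -
    have "tr \<le> card R2j" unfolding R2j_def using card_big[OF I s, of "2*s+1" j] OAj(2) s by auto
    then show ?thesis unfolding Kj_def R2j_def using card_fst_Rv[OF I] by simp
  qed
  have "A \<inter> Kj \<noteq> {}"
  proof
    assume e: "A \<inter> Kj = {}"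
    have fA: "finite A" "finite Kj" using Asub Ksub finite_subset by auto
    have "card (A \<union> Kj) = card A + card Kj" using e fA card_Un_disjoint by blast
    moreover have "card (A \<union> Kj) \<le> n" using Asub Ksub card_mono[of "{1..n}" "A \<union> Kj"] by auto
    ultimately show False using tsA trK nts by linarith
  qed
  then obtain k X p where k: "(k, Inr X) \<in> R2i" "m \<in> X" "(k, p) \<in> R2j" unfolding A_def Kj_def by force
  have "Inr X = Inr (msgs1 (Rv (loc (c t) k) (2*s)))"
    using inr_entry[OF I k(1)[unfolded R2i_def]] by blast
  moreover have "p = Inr (msgs1 (Rv (loc (c t) k) (2*s)))"
    using inr_entry[OF I k(3)[unfolded R2j_def]] by blast
  ultimately have "(k, Inr X) \<in> R2j" using k(3) by simp
  then show ?thesis using OAj(1) k(2) unfolding OUT_def by auto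
qed


lemma double_count:
  fixes K U :: "nat set" and N :: "nat \<Rightarrow> nat set"
  assumes fK: "finite K" and fU: "finite U" and sub: "\<forall>k\<in>K. N k \<subseteq> U"
  shows "(\<Sum>k\<in>K. card (N k)) = (\<Sum>j\<in>U. card {k\<in>K. j \<in> N k})"
proof -
  have "card (N k) = (\<Sum>j\<in>U. if j \<in> N k then 1 else 0)" if "k \<in> K" for k
  proof -
    have "U \<inter> N k = N k" using sub that by auto
    then show ?thesis using sum.inter_restrict[OF fU, of "\<lambda>_. 1::nat" "N k"] by simp
  qed
  then have "(\<Sum>k\<in>K. card (N k)) = (\<Sum>k\<in>K. \<Sum>j\<in>U. if j \<in> N k then 1 else 0)" by simp
  also have "\<dots> = (\<Sum>j\<in>U. \<Sum>k\<in>K. if j \<in> N k then 1 else 0)" by (rule sum.swap)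
  also have "\<dots> = (\<Sum>j\<in>U. card {k\<in>K. j \<in> N k})"
  proof (rule sum.cong)
    fix j assume "j \<in> U"
    have "K \<inter> {k. j \<in> N k} = {k\<in>K. j \<in> N k}" by auto
    then show "(\<Sum>k\<in>K. if j \<in> N k then 1 else 0) = card {k\<in>K. j \<in> N k}"
      using sum.inter_restrict[OF fK, of "\<lambda>_. 1::nat" "{k. j \<in> N k}"] by simp
  qed simp
  finally show ?thesis .
qed

lemma count_bound:
  fixes K NB :: "nat set" and N :: "nat \<Rightarrow> nat set" and n tr ts :: nat
  assumes fK: "finite K" and sub: "\<forall>k\<in>K. N k \<subseteq> {1..n} \<and> tr \<le> card (N k)"
    and NB: "NB \<subseteq> {1..n}" and out: "\<forall>j\<in>{1..n} - NB. card {k\<in>K. j \<in> N k} \<le> ts - 1"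
  shows "card K * tr \<le> card NB * card K + (n - card NB) * (ts - 1)"
proof -
  have "card K * tr = (\<Sum>k\<in>K. tr)" by simp
  also have "\<dots> \<le> (\<Sum>k\<in>K. card (N k))" using sub by (intro sum_mono) auto
  also have "\<dots> = (\<Sum>j\<in>{1..n}. card {k\<in>K. j \<in> N k})" using double_count[OF fK, of "{1..n}" N] sub by auto
  also have "\<dots> \<le> (\<Sum>j\<in>{1..n}. if j \<in> NB then card K else ts - 1)"
  proof (rule sum_mono)
    fix j assume j: "j \<in> {1..n}"
    show "card {k\<in>K. j \<in> N k} \<le> (if j \<in> NB then card K else ts - 1)"
    proof (cases "j \<in> NB")
      case True
      then show ?thesis using fK by (simp add: card_mono)
    next
      case False
      then show ?thesis using out j by auto
    qed
  qed
  also have "\<dots> = (\<Sum>j\<in>{1..n} \<inter> {x. x \<in> NB}. card K) + (\<Sum>j\<in>{1..n} \<inter> - {x. x \<in> NB}. ts - 1)"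
    by (rule sum.If_cases) simp
  also have "\<dots> = card NB * card K + (n - card NB) * (ts - 1)"
  proof -
    have a: "{1..n} \<inter> {x. x \<in> NB} = NB" using NB by auto
    have b: "{1..n} \<inter> - {x. x \<in> NB} = {1..n} - NB" by auto
    have "card ({1..n} - NB) = n - card NB" using NB by (simp add: card_Diff_subset finite_subset)
    then show ?thesis unfolding a b by simp
  qed
  finally show ?thesis .
qed

lemma bcast_thr:
  assumes E: "tlcb_execution n tr ts app c" and tr: "0 < tr" and s: "1 \<le> s"
    and r: "returns_at c i s R B"
    and trn: "tr \<le> n" and tstr: "ts \<le> tr" and ts0: "0 < ts"
    and tb: "real tb \<le> real n - real tr * real (n - tr) / real (tr - ts + 1)"
  shows "threshold_set n c s tb B"
proof -
  obtain t0 where t0: "\<forall>t\<ge>t0. s \<le> length (outs (loc (c t) i)) \<and> outs (loc (c t) i) ! (s - 1) = (R, B)"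
    using returns_stable[OF E tr r s] by blast
  define t where "t = t0"
  have I: "tinv n tr ts (c t)" by (rule exec_inv[OF E tr])
  have o: "s \<le> length (outs (loc (c t) i))" "outs (loc (c t) i) ! (s - 1) = (R, B)" using t0 t_def by auto
  define R2 where "R2 = Rv (loc (c t) i) (2*s+1)"
  have OA: "(R, B) = OUT ts (Rv (loc (c t) i) (2*s)) R2" "2*s+1 < stp (loc (c t) i)"
    using out_at[OF I s o(1)] o(2) R2_def by auto
  define K where "K = fst ` R2"
  define Nk where "Nk k = fst ` Rv (loc (c t) k) (2*s)" for k
  define Xk where "Xk k = msgs1 (Rv (loc (c t) k) (2*s))" for k
  have Ksub: "K \<subseteq> {1..n}" unfolding K_def R2_def using fst_Rv_sub[OF I] by blast
  have fK: "finite K" using Ksub finite_subset by blast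
  have trK: "tr \<le> card K"
  proof -
    have "tr \<le> card R2" unfolding R2_def using card_big[OF I s, of "2*s+1" i] OA(2) s by auto
    then show ?thesis unfolding K_def R2_def using card_fst_Rv[OF I] by simp
  qed
  have Kinfo: "\<forall>k\<in>K. 2*s < stp (loc (c t) k)" unfolding K_def R2_def using inr_entry[OF I] by force
  have XN: "Xk k = msgs_of c (Nk k) s" for k unfolding Xk_def Nk_def using M1[OF E tr] by blast
  have Nbc: "\<forall>j\<in>Nk k. \<exists>m. broadcast_in c j s m" for k unfolding Nk_def using M1[OF E tr] by blast
  have Nsub: "\<forall>k\<in>K. Nk k \<subseteq> {1..n} \<and> tr \<le> card (Nk k)"
  proof
    fix k assume k: "k \<in> K"
    have "Nk k \<subseteq> {1..n}" unfolding Nk_def using fst_Rv_sub[OF I] by blast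
    moreover have "tr \<le> card (Rv (loc (c t) k) (2*s))" using card_big[OF I s, of "2*s" k] Kinfo k s by auto
    ultimately show "Nk k \<subseteq> {1..n} \<and> tr \<le> card (Nk k)" unfolding Nk_def using card_fst_Rv[OF I] by simp
  qed
  have cnt_eq: "{j. \<exists>X. (j, Inr X) \<in> R2 \<and> m \<in> X} = {k\<in>K. m \<in> Xk k}" for m
  proof (rule set_eqI)
    fix k
    show "k \<in> {j. \<exists>X. (j, Inr X) \<in> R2 \<and> m \<in> X} \<longleftrightarrow> k \<in> {k\<in>K. m \<in> Xk k}"
    proof
      assume "k \<in> {j. \<exists>X. (j, Inr X) \<in> R2 \<and> m \<in> X}"
      then obtain X where "(k, Inr X) \<in> R2" "m \<in> X" by blast
      then show "k \<in> {k\<in>K. m \<in> Xk k}" unfolding K_def Xk_def R2_def using inr_entry[OF I] by force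
    next
      assume "k \<in> {k\<in>K. m \<in> Xk k}"
      then obtain p where "(k, p) \<in> R2" "m \<in> Xk k" unfolding K_def by auto
      then show "k \<in> {j. \<exists>X. (j, Inr X) \<in> R2 \<and> m \<in> X}" unfolding Xk_def R2_def using inr_entry[OF I] by blast
    qed
  qed
  have BB: "B = {m. ts \<le> card {k\<in>K. m \<in> Xk k}}" using OA(1) cnt_eq unfolding OUT_def by auto
  define NB where "NB = {j \<in> {1..n}. \<exists>m\<in>B. broadcast_in c j s m}"
  have NBsub: "NB \<subseteq> {1..n}" unfolding NB_def by auto
  have msgsNB: "msgs_of c NB s = B"
  proof (rule set_eqI)
    fix m
    show "m \<in> msgs_of c NB s \<longleftrightarrow> m \<in> B"
    proof
      assume "m \<in> msgs_of c NB s"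
      then obtain j m' where "broadcast_in c j s m" "m' \<in> B" "broadcast_in c j s m'"
        unfolding msgs_of_def NB_def by auto
      then show "m \<in> B" using bc_fun[OF E tr s] by metis
    next
      assume mB: "m \<in> B"
      then have "0 < card {k\<in>K. m \<in> Xk k}" using BB ts0 by auto
      then obtain k where "k \<in> K" "m \<in> Xk k" by (metis (no_types, lifting) card.empty empty_Collect_eq less_irrefl)
      then obtain j where "j \<in> Nk k" "broadcast_in c j s m" using XN unfolding msgs_of_def by auto
      moreover have "j \<in> {1..n}" using Nsub \<open>k \<in> K\<close> \<open>j \<in> Nk k\<close> by blast
      ultimately have "j \<in> NB" using mB unfolding NB_def by blast
      then show "m \<in> msgs_of c NB s" using \<open>broadcast_in c j s m\<close> unfolding msgs_of_def by auto
    qed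
  qed
  have out: "\<forall>j\<in>{1..n} - NB. card {k\<in>K. j \<in> Nk k} \<le> ts - 1"
  proof
    fix j assume j: "j \<in> {1..n} - NB"
    show "card {k\<in>K. j \<in> Nk k} \<le> ts - 1"
    proof (cases "{k\<in>K. j \<in> Nk k} = {}")
      case True then show ?thesis by (metis card.empty zero_le)
    next
      case False
      then obtain k0 where "j \<in> Nk k0" by auto
      then obtain mj where mj: "broadcast_in c j s mj" using Nbc by blast
      have "mj \<notin> B" using j mj unfolding NB_def by auto
      then have lt: "card {k\<in>K. mj \<in> Xk k} < ts" using BB by auto
      have "{k\<in>K. j \<in> Nk k} \<subseteq> {k\<in>K. mj \<in> Xk k}" using mj XN unfolding msgs_of_def by auto
      then have "card {k\<in>K. j \<in> Nk k} \<le> card {k\<in>K. mj \<in> Xk k}" using fK by (intro card_mono) auto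
      then show ?thesis using lt by linarith
    qed
  qed
  have "card K * tr \<le> card NB * card K + (n - card NB) * (ts - 1)"
    by (rule count_bound[OF fK Nsub NBsub out])
  moreover have "card NB \<le> n" using NBsub card_mono[of "{1..n}" NB] by auto
  ultimately have "tb \<le> card NB" using arith_core[OF _ trK trn tstr ts0 _ tb] by blast
  moreover have "\<forall>j\<in>NB. \<exists>m. broadcast_in c j s m" unfolding NB_def by auto
  ultimately show ?thesis unfolding threshold_set_def using NBsub msgsNB by blast
qed



lemma stp_mono:
  assumes E: "tlcb_execution n tr ts app c" and tr: "0 < tr" and le: "t \<le> t'"
  shows "stp (loc (c t) j) \<le> stp (loc (c t') j)"
  using ext_mono[OF E tr le] by (simp add: lext_def)

lemma Rv_mono:
  assumes E: "tlcb_execution n tr ts app c" and tr: "0 < tr" and le: "t \<le> t'"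
  shows "Rv (loc (c t) j) s \<subseteq> Rv (loc (c t') j) s"
  using ext_mono[OF E tr le] by (simp add: lext_def)

lemma len_hist:
  assumes I: "tinv n tr ts c" and "k \<in> {1..n}" "i \<in> {1..n}"
  shows "length (hist c k i) = stp (loc c k) - 1"
  using assms by (simp add: tinv_def)

lemma dlv_le:
  assumes I: "tinv n tr ts c" and "k \<in> {1..n}" "i \<in> {1..n}"
  shows "dlv c k i \<le> stp (loc c i) - 1 \<and> dlv c k i \<le> stp (loc c k) - 1"
  using assms by (simp add: tinv_def)

lemma finite_time:
  fixes P :: "nat \<Rightarrow> nat \<Rightarrow> bool"
  assumes fA: "finite A" and ex: "\<forall>j\<in>A. \<exists>t. P j t" and mono: "\<And>j t t'. j \<in> A \<Longrightarrow> P j t \<Longrightarrow> t \<le> t' \<Longrightarrow> P j t'"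
  shows "\<exists>t\<ge>T. \<forall>j\<in>A. P j t"
proof -
  obtain g where g: "\<forall>j\<in>A. P j (g j)" using ex by metis
  have "\<forall>j\<in>A. P j (T + sum g A)"
  proof
    fix j assume j: "j \<in> A"
    have "g j \<le> sum g A" using member_le_sum[OF j _ fA, of g] by simp
    then show "P j (T + sum g A)" using mono[OF j g[rule_format, OF j]] by simp
  qed
  then show ?thesis by (metis le_add1)
qed

lemma liveness:
  assumes E: "tlcb_execution n tr ts app c" and tr: "0 < tr" and trf: "tr \<le> n - f"
    and fl: "card {i \<in> {1..n}. failed c i} \<le> f"
    and i: "i \<in> {1..n}" "\<not> failed c i"
  shows "\<exists>t. S \<le> stp (loc (c t) i)"
proof (rule ccontr)
  assume nS: "\<nexists>t. S \<le> stp (loc (c t) i)"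
  define NF where "NF = {i \<in> {1..n}. \<not> failed c i}"
  have fNF: "finite NF" unfolding NF_def by simp
  have cNF: "tr \<le> card NF"
  proof -
    have "{1..n} = NF \<union> {i \<in> {1..n}. failed c i}" "NF \<inter> {i \<in> {1..n}. failed c i} = {}" unfolding NF_def by auto
    then have "n = card NF + card {i \<in> {1..n}. failed c i}"
      by (metis (no_types, lifting) card_Un_disjoint card_atLeastAtMost diff_Suc_1 finite_Un finite_atLeastAtMost)
    then show ?thesis using fl trf by linarith
  qed
  have I: "\<And>t. tinv n tr ts (c t)" by (rule exec_inv[OF E tr])
  have fair: "fair n c" using E by (simp add: tlcb_execution_def)
  have fair1: "\<And>j. j \<in> NF \<Longrightarrow> \<exists>t. 2 \<le> stp (loc (c t) j)" using fair unfolding fair_def NF_def by auto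
  have fair2: "\<And>j k t. j \<in> NF \<Longrightarrow> k \<in> {1..n} \<Longrightarrow> \<exists>t'. length (hist (c t) k j) \<le> dlv (c t') k j"
    using fair unfolding fair_def NF_def by auto
  define P where "P s \<longleftrightarrow> (\<exists>j\<in>NF. \<forall>t. stp (loc (c t) j) \<le> s)" for s
  have PS: "P S" unfolding P_def NF_def using nS i by (auto simp: not_le less_imp_le)
  define s0 where "s0 = (LEAST s. P s)"
  have Ps0: "P s0" unfolding s0_def by (rule LeastI[of P S, OF PS])
  then obtain i0 where i0: "i0 \<in> NF" "\<forall>t. stp (loc (c t) i0) \<le> s0" unfolding P_def by blast
  have s02: "2 \<le> s0" using fair1[OF i0(1)] i0(2) by (meson le_trans)
  have reach: "\<And>j. j \<in> NF \<Longrightarrow> \<exists>t. s0 \<le> stp (loc (c t) j)"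
  proof (rule ccontr)
    fix j assume j: "j \<in> NF" and no: "\<nexists>t. s0 \<le> stp (loc (c t) j)"
    have "\<forall>t. stp (loc (c t) j) \<le> s0 - 1"
    proof
      fix t
      have "stp (loc (c t) j) < s0" using no by (simp add: not_le)
      then show "stp (loc (c t) j) \<le> s0 - 1" by linarith
    qed
    then have "P (s0 - 1)" unfolding P_def using j by blast
    then have "s0 \<le> s0 - 1" unfolding s0_def by (rule Least_le)
    then show False using s02 by linarith
  qed
  have i0n: "i0 \<in> {1..n}" using i0 unfolding NF_def by auto
  show False
  proof (cases "\<exists>j\<in>{1..n}. \<exists>t. s0 + 1 \<le> stp (loc (c t) j)")
    case True
    then obtain j t where j: "j \<in> {1..n}" "s0 + 1 \<le> stp (loc (c t) j)" by blast
    have "s0 \<le> length (hist (c t) j i0)" using len_hist[OF I j(1) i0n] j(2) by simp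
    moreover obtain t' where "length (hist (c t) j i0) \<le> dlv (c t') j i0" using fair2[OF i0(1) j(1)] by blast
    ultimately have "s0 \<le> stp (loc (c t') i0) - 1" using dlv_le[OF I j(1) i0n, of t'] by linarith
    then show False using i0(2)[rule_format, of t'] s02 by linarith
  next
    case False
    have bnd: "\<And>j t. j \<in> {1..n} \<Longrightarrow> stp (loc (c t) j) \<le> s0"
    proof -
      fix j t assume "j \<in> {1..n}"
      then have "\<not> s0 + 1 \<le> stp (loc (c t) j)" using False by blast
      then show "stp (loc (c t) j) \<le> s0" by linarith
    qed
    define Q where "Q t \<longleftrightarrow> (\<exists>F\<in>NF. s0 \<le> stp (loc (c t) F))" for t
    obtain t1 where "s0 \<le> stp (loc (c t1) i0)" using reach[OF i0(1)] by blast
    then have Qt1: "Q t1" unfolding Q_def using i0(1) by blast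
    define T where "T = (LEAST t. Q t)"
    have QT: "Q T" unfolding T_def by (rule LeastI[of Q t1, OF Qt1])
    then obtain F where F: "F \<in> NF" "s0 \<le> stp (loc (c T) F)" unfolding Q_def by blast
    have Fn: "F \<in> {1..n}" using F(1) unfolding NF_def by auto
    have T0: "T \<noteq> 0"
    proof
      assume "T = 0"
      then have "stp (loc (c 0) F) = 1" using E by (simp add: tlcb_execution_def init_config_def init_lstate_def)
      then show False using F(2) \<open>T = 0\<close> s02 by simp
    qed
    then obtain T' where T': "T = Suc T'" by (cases T) auto
    have before: "\<And>j. j \<in> NF \<Longrightarrow> stp (loc (c T') j) < s0"
    proof (rule ccontr)
      fix j assume j: "j \<in> NF" "\<not> stp (loc (c T') j) < s0"
      then have "Q T'" unfolding Q_def by (auto simp: not_less)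
      then have "T \<le> T'" unfolding T_def by (rule Least_le)
      then show False using T' by simp
    qed
    have stF: "\<And>t. T \<le> t \<Longrightarrow> stp (loc (c t) F) = s0"
      using stp_mono[OF E tr] F(2) bnd[OF Fn] by (meson le_antisym le_trans)
    have dT: "\<And>j. j \<in> NF \<Longrightarrow> dlv (c T) j F \<le> s0 - 2"
    proof -
      fix j assume j: "j \<in> NF"
      have jn: "j \<in> {1..n}" using j unfolding NF_def by auto
      have st: "(\<forall>a b. dlv (c T') a b \<le> dlv (c (Suc T')) a b) \<and>
         (\<forall>a b. dlv (c T') a b < dlv (c (Suc T')) a b \<longrightarrow> dlv (c (Suc T')) a b = Suc (dlv (c T') a b) \<and> dlv (c T') a b < length (hist (c T') a b) \<and>
         (dlv (c T') a b + 2 = stp (loc (c T') b) \<longrightarrow> (a, pay (loc (c T') a) (stp (loc (c T') b))) \<in> Rv (loc (c (Suc T')) b) (stp (loc (c T') b))))"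
        using step_facts[OF I exec_step[OF E]] by blast
      have l: "length (hist (c T') j F) = stp (loc (c T') j) - 1" by (rule len_hist[OF I jn Fn])
      have d0: "dlv (c T') j F \<le> stp (loc (c T') j) - 1" using dlv_le[OF I jn Fn] by blast
      have "dlv (c T) j F \<le> length (hist (c T') j F)"
        using st d0 l T' by (metis le_eq_less_or_eq not_le Suc_leI)
      then show "dlv (c T) j F \<le> s0 - 2" using l before[OF j] by linarith
    qed
    have claim: "\<And>t. T \<le> t \<Longrightarrow> \<forall>j\<in>NF. s0 - 1 \<le> dlv (c t) j F \<longrightarrow> j \<in> fst ` Rv (loc (c t) F) s0"
    proof -
      fix t assume "T \<le> t"
      then show "\<forall>j\<in>NF. s0 - 1 \<le> dlv (c t) j F \<longrightarrow> j \<in> fst ` Rv (loc (c t) F) s0"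
      proof (induction t rule: dec_induct)
        case base
        then show ?case using dT s02 by fastforce
      next
        case (step m)
        show ?case
        proof (intro ballI impI)
          fix j assume j: "j \<in> NF" and dj: "s0 - 1 \<le> dlv (c (Suc m)) j F"
          have st: "(\<forall>a b. dlv (c m) a b < dlv (c (Suc m)) a b \<longrightarrow> dlv (c (Suc m)) a b = Suc (dlv (c m) a b) \<and> dlv (c m) a b < length (hist (c m) a b) \<and>
             (dlv (c m) a b + 2 = stp (loc (c m) b) \<longrightarrow> (a, pay (loc (c m) a) (stp (loc (c m) b))) \<in> Rv (loc (c (Suc m)) b) (stp (loc (c m) b))))"
            using step_facts[OF I exec_step[OF E]] by blast
          show "j \<in> fst ` Rv (loc (c (Suc m)) F) s0"
          proof (cases "s0 - 1 \<le> dlv (c m) j F")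
            case True
            then have "j \<in> fst ` Rv (loc (c m) F) s0" using step.IH j by blast
            then show ?thesis using Rv_mono[OF E tr, of m "Suc m" F s0] by auto
          next
            case False
            then have "dlv (c m) j F < dlv (c (Suc m)) j F" using dj by linarith
            then have "dlv (c (Suc m)) j F = Suc (dlv (c m) j F)"
               "dlv (c m) j F + 2 = stp (loc (c m) F) \<longrightarrow> (j, pay (loc (c m) j) (stp (loc (c m) F))) \<in> Rv (loc (c (Suc m)) F) (stp (loc (c m) F))"
              using st by blast+
            moreover have "stp (loc (c m) F) = s0" using stF step.hyps by simp
            ultimately have "(j, pay (loc (c m) j) s0) \<in> Rv (loc (c (Suc m)) F) s0" using dj False s02 by auto
            then show ?thesis by force
          qed
        qed
      qed
    qed
    have ev: "\<forall>j\<in>NF. \<exists>t. s0 - 1 \<le> dlv (c t) j F"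
    proof
      fix j assume j: "j \<in> NF"
      have jn: "j \<in> {1..n}" using j unfolding NF_def by auto
      obtain t where "s0 \<le> stp (loc (c t) j)" using reach[OF j] by blast
      then have "s0 - 1 \<le> length (hist (c t) j F)" using len_hist[OF I jn Fn] by simp
      moreover obtain t' where "length (hist (c t) j F) \<le> dlv (c t') j F" using fair2[OF F(1) jn] by blast
      ultimately show "\<exists>t. s0 - 1 \<le> dlv (c t) j F" by (meson le_trans)
    qed
    obtain ts' where ts': "T \<le> ts'" "\<forall>j\<in>NF. s0 - 1 \<le> dlv (c ts') j F"
      using finite_time[OF fNF ev, of T] dlv_mono[OF E tr] by (meson le_trans)
    have sub: "NF \<subseteq> fst ` Rv (loc (c ts') F) s0" using claim[OF ts'(1)] ts'(2) by blast
    have okF: "loc_ok tr ts (loc (c ts') F)" by (rule inv_loc[OF I])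
    then have fin: "finite (Rv (loc (c ts') F) s0)" unfolding loc_ok_def by blast
    have "card NF \<le> card (fst ` Rv (loc (c ts') F) s0)" using sub fin by (intro card_mono) auto
    also have "\<dots> \<le> card (Rv (loc (c ts') F) s0)" using fin by (rule card_image_le)
    finally have "tr \<le> card (Rv (loc (c ts') F) s0)" using cNF by linarith
    moreover have "card (Rv (loc (c ts') F) (stp (loc (c ts') F))) < tr" using okF unfolding loc_ok_def by blast
    ultimately show False using stF[OF ts'(1)] by simp
  qed
qed



theorem theorem4:
  fixes n f tr ts tb :: nat
    and app :: "'m app"
    and c :: "nat \<Rightarrow> 'm config"
  assumes "0 < tr" and "tr \<le> n - f"
    and "0 < ts" and "ts \<le> tr" and "n < tr + ts"
    and "0 < tb"
    and "real tb \<le> real n - real tr * real (n - tr) / real (tr - ts + 1)"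
    and "tlcb_execution n tr ts app c"
    and "card {i \<in> {1..n}. failed c i} \<le> f"
  shows "TSB_full n tr tb c"
proof -
  note E = assms(8) and tr = assms(1)
  have trn: "tr \<le> n" using assms(2) by linarith
  have L: "\<forall>i\<in>{1..n}. \<not> failed c i \<longrightarrow> (\<forall>s\<ge>1. \<exists>R B. returns_at c i s R B)"
  proof (intro ballI impI allI)
    fix i and s :: nat assume i: "i \<in> {1..n}" "\<not> failed c i" and s: "1 \<le> s"
    obtain t where t: "2*s+2 \<le> stp (loc (c t) i)" using liveness[OF E tr assms(2) assms(9) i] by blast
    have "loc_ok tr ts (loc (c t) i)" by (rule inv_loc[OF exec_inv[OF E tr]])
    then have "length (outs (loc (c t) i)) = (stp (loc (c t) i) - 2) div 2" unfolding loc_ok_def by blast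
    then have "s \<le> length (outs (loc (c t) i))" using t by auto
    then have "returns_at c i s (fst (outs (loc (c t) i) ! (s - 1))) (snd (outs (loc (c t) i) ! (s - 1)))"
      unfolding returns_at_def by auto
    then show "\<exists>R B. returns_at c i s R B" by blast
  qed
  have T: "\<forall>i\<in>{1..n}. \<forall>s\<ge>1. \<forall>R B. returns_at c i s R B \<longrightarrow>
        threshold_set n c s tr R \<and> threshold_set n c s tb B"
    using recv_thr[OF E tr] bcast_thr[OF E tr _ _ trn assms(4) assms(3) assms(7)] by blast
  have S: "\<forall>i\<in>{1..n}. \<forall>s\<ge>1. \<forall>R B m. returns_at c i s R B \<and> m \<in> B \<longrightarrow>
        (\<forall>j\<in>{1..n}. \<forall>R' B'. returns_at c j s R' B' \<longrightarrow> m \<in> R')"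
    using spread[OF E tr _ assms(5)] by blast
  show ?thesis unfolding TSB_full_def using L T S by blast
qed

end
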